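(* Suppose the linear system $\dot x = A(t)x$ has a nonuniform exponential dichotomy on $\mathbb{R}_0^+$ with constants $(K,\alpha,\mu)$ and a nonuniform bounded growth on $\mathbb{R}_0^+$ with constants $(K_0,a,\varepsilon)$. Then $$a+\max\{\mu,\varepsilon\}\geq \alpha .$$
   Context: Standing setting: $A\colon\mathbb{R}_0^+=[0,+\infty)\to M_n(\mathbb{R})$ is continuous, $\Phi(t)$ is a fundamental matrix of $\dot x=A(t)x$, and $\Phi(t,s):=\Phi(t)\Phi^{-1}(s)$ is the evolution operator. $|\cdot|$ is a norm on $\mathbb{R}^n$ and $\|\cdot\|$ the induced matrix norm. Nonuniform exponential dichotomy on $\mathbb{R}_0^+$ with constants $(K,\alpha,\mu)$: there exist a projector-valued function $P(\cdot)$ (i.e. $P(t)^2=P(t)$) and constants $K\ge 1$, $\alpha>0$, $0\le\mu<\alpha$ such that for all $t,s\ge 0$: $P(t)\Phi(t,s)=\Phi(t,s)P(s)$; $\|\Phi(t,s)P(s)\|\le Ke^{-\alpha(t-s)+\mu s}$ for $t\ge s$; and $\|\Phi(t,s)(I-P(s))\|\le Ke^{\alpha(t-s)+\mu s}$ for $t\le s$. Nonuniform bounded growth on $\mathbb{R}_0^+$ with constants $(K_0,a,\varepsilon)$: there exist $K_0\ge1$, $a>0$, $\varepsilon\ge0$ with $\|\Phi(t,s)\|\le K_0e^{a|t-s|+\varepsilon s}$ for all $t,s\ge0$. *)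

theory Defs
  imports "HOL-Analysis.Analysis"
begin

definition is_norm :: "(real^'n \<Rightarrow> real) \<Rightarrow> bool" where
  "is_norm N \<longleftrightarrow> (\<forall>x. 0 \<le> N x) \<and> (\<forall>x. N x = 0 \<longleftrightarrow> x = 0)
     \<and> (\<forall>c x. N (c *\<^sub>R x) = \<bar>c\<bar> * N x) \<and> (\<forall>x y. N (x + y) \<le> N x + N y)"

definition induced_norm :: "(real^'n \<Rightarrow> real) \<Rightarrow> real^'n^'n \<Rightarrow> real" where
  "induced_norm N M = (SUP x\<in>{x. N x = 1}. N (M *v x))"

definition fundamental_matrix :: "(real \<Rightarrow> real^'n^'n) \<Rightarrow> (real \<Rightarrow> real^'n^'n) \<Rightarrow> bool" where
  "fundamental_matrix A \<Phi> \<longleftrightarrow>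
     (\<forall>t\<ge>0. (\<Phi> has_vector_derivative (A t ** \<Phi> t)) (at t within {0..}))
     \<and> (\<forall>t\<ge>0. invertible (\<Phi> t))"

definition evol :: "(real \<Rightarrow> real^'n^'n) \<Rightarrow> real \<Rightarrow> real \<Rightarrow> real^'n^'n" where
  "evol \<Phi> t s = \<Phi> t ** matrix_inv (\<Phi> s)"

definition nonuniform_exp_dichotomy ::
  "(real^'n \<Rightarrow> real) \<Rightarrow> (real \<Rightarrow> real^'n^'n) \<Rightarrow> (real \<Rightarrow> real^'n^'n) \<Rightarrow> real \<Rightarrow> real \<Rightarrow> real \<Rightarrow> bool" where
  "nonuniform_exp_dichotomy N \<Phi> P K \<alpha> \<mu> \<longleftrightarrow>
     K \<ge> 1 \<and> \<alpha> > 0 \<and> 0 \<le> \<mu> \<and> \<mu> < \<alpha>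
     \<and> (\<forall>t\<ge>0. P t ** P t = P t)
     \<and> (\<forall>t s. 0 \<le> t \<longrightarrow> 0 \<le> s \<longrightarrow> P t ** evol \<Phi> t s = evol \<Phi> t s ** P s)
     \<and> (\<forall>t s. 0 \<le> s \<longrightarrow> s \<le> t \<longrightarrow>
          induced_norm N (evol \<Phi> t s ** P s) \<le> K * exp (- \<alpha> * (t - s) + \<mu> * s))
     \<and> (\<forall>t s. 0 \<le> t \<longrightarrow> t \<le> s \<longrightarrow>
          induced_norm N (evol \<Phi> t s ** (mat 1 - P s)) \<le> K * exp (\<alpha> * (t - s) + \<mu> * s))"

definition nonuniform_bounded_growth ::
  "(real^'n \<Rightarrow> real) \<Rightarrow> (real \<Rightarrow> real^'n^'n) \<Rightarrow> real \<Rightarrow> real \<Rightarrow> real \<Rightarrow> bool" where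
  "nonuniform_bounded_growth N \<Phi> K0 a \<epsilon> \<longleftrightarrow>
     K0 \<ge> 1 \<and> a > 0 \<and> \<epsilon> \<ge> 0
     \<and> (\<forall>t s. 0 \<le> t \<longrightarrow> 0 \<le> s \<longrightarrow>
          induced_norm N (evol \<Phi> t s) \<le> K0 * exp (a * \<bar>t - s\<bar> + \<epsilon> * s))"

end

theory Submission
  imports Defs
begin

lemma normN_basic:
  assumes "is_norm N"
  shows "N 0 = 0" "\<And>x. N (- x) = N x" "\<And>x y. N (x - y) \<le> N x + N y"
proof -
  show "N 0 = 0" using assms unfolding is_norm_def by auto
  show neg: "\<And>x. N (- x) = N x"
    using assms unfolding is_norm_def by (metis abs_minus_cancel abs_one mult_1 scaleR_minus1_left)
  show "\<And>x y. N (x - y) \<le> N x + N y"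
    using assms neg unfolding is_norm_def by (metis diff_conv_add_uminus)
qed

lemma normN_sum:
  assumes "is_norm N" "finite S"
  shows "N (sum f S) \<le> (\<Sum>i\<in>S. N (f i))"
  using assms(2)
proof (induction S rule: finite_induct)
  case empty then show ?case using normN_basic[OF assms(1)] by simp
next
  case (insert x F)
  have "N (sum f (insert x F)) = N (f x + sum f F)" using insert by simp
  also have "\<dots> \<le> N (f x) + N (sum f F)" using assms(1) unfolding is_norm_def by blast
  finally show ?case using insert by simp
qed

lemma normN_upper:
  fixes N :: "real^'n \<Rightarrow> real"
  assumes "is_norm N"
  obtains C where "C \<ge> 0" "\<And>x. N x \<le> C * norm x"
proof -
  define C where "C = (\<Sum>i\<in>UNIV. N (axis i (1::real)))"
  have C0: "C \<ge> 0" unfolding C_def using assms unfolding is_norm_def by (simp add: sum_nonneg)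
  have "N x \<le> C * norm x" for x
  proof -
    have "N x = N (\<Sum>i\<in>UNIV. (x$i) *\<^sub>R axis i 1)"
      using basis_expansion[of x] by (simp add: scalar_mult_eq_scaleR)
    also have "\<dots> \<le> (\<Sum>i\<in>UNIV. N ((x$i) *\<^sub>R axis i 1))" by (rule normN_sum[OF assms]) simp
    also have "\<dots> = (\<Sum>i\<in>UNIV. \<bar>x$i\<bar> * N (axis i 1))" using assms unfolding is_norm_def by simp
    also have "\<dots> \<le> (\<Sum>i\<in>UNIV. norm x * N (axis i 1))"
      apply (rule sum_mono) apply (rule mult_right_mono)
      using component_le_norm_cart assms unfolding is_norm_def by auto
    also have "\<dots> = C * norm x" unfolding C_def by (simp add: sum_distrib_left mult.commute)
    finally show ?thesis .
  qed
  with C0 that show thesis by blast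
qed

lemma normN_lower:
  fixes N :: "real^'n \<Rightarrow> real"
  assumes "is_norm N"
  obtains c where "c > 0" "\<And>x. c * norm x \<le> N x"
proof -
  obtain C where C: "C \<ge> 0" "\<And>x. N x \<le> C * norm x" using normN_upper[OF assms] by blast
  have lip: "\<bar>N x - N y\<bar> \<le> C * norm (x - y)" for x y
  proof -
    have t: "N (u + v) \<le> N u + N v" for u v using assms unfolding is_norm_def by blast
    have "N x \<le> N (x - y) + N y" using t[of "x - y" y] by simp
    moreover have "N y \<le> N (y - x) + N x" using t[of "y - x" x] by simp
    moreover have "N (y - x) = N (x - y)" using normN_basic(2)[OF assms, of "x - y"] by simp
    ultimately have "\<bar>N x - N y\<bar> \<le> N (x - y)" by linarith
    then show ?thesis using C(2) by (meson order_trans)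
  qed
  have cont: "continuous_on UNIV N"
  proof (rule lipschitz_on_continuous_on)
    show "C-lipschitz_on UNIV N"
      unfolding lipschitz_on_def using C(1) lip by (simp add: dist_norm)
  qed
  have ne: "sphere (0::real^'n) 1 \<noteq> {}"
  proof -
    have "norm (axis undefined (1::real) :: real^'n) = 1" by simp
    then show ?thesis by (metis dist_0_norm mem_sphere empty_iff)
  qed
  obtain x0 where x0: "x0 \<in> sphere 0 1" "\<And>y. y \<in> sphere 0 1 \<Longrightarrow> N x0 \<le> N y"
    using continuous_attains_inf[OF compact_sphere ne continuous_on_subset[OF cont]] by blast
  have c: "N x0 > 0"
  proof -
    have "x0 \<noteq> 0" using x0(1) by auto
    then show ?thesis using assms unfolding is_norm_def by (metis less_eq_real_def)
  qed
  have "N x0 * norm x \<le> N x" for x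
  proof (cases "x = 0")
    case True then show ?thesis using normN_basic[OF assms] by simp
  next
    case False
    then have "(1/norm x) *\<^sub>R x \<in> sphere 0 1" by simp
    then have "N x0 \<le> N ((1/norm x) *\<^sub>R x)" by (rule x0(2))
    also have "\<dots> = N x / norm x" using assms unfolding is_norm_def by simp
    finally show ?thesis using False by (simp add: field_simps)
  qed
  with c that show thesis by blast
qed

lemma induced_bdd:
  fixes N :: "real^'n \<Rightarrow> real" and M :: "real^'n^'n"
  assumes "is_norm N"
  shows "bdd_above ((\<lambda>x. N (M *v x)) ` {x. N x = 1})"
proof -
  obtain C where C: "C \<ge> 0" "\<And>x. N x \<le> C * norm x" using normN_upper[OF assms] by blast
  obtain c where c: "c > 0" "\<And>x. c * norm x \<le> N x" using normN_lower[OF assms] by blast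
  have bl: "bounded_linear ((*v) M)" by (simp add: matrix_vector_mul_bounded_linear)
  obtain B where B: "\<And>x. norm (M *v x) \<le> norm x * B" "B > 0"
    using bounded_linear.pos_bounded[OF bl] by blast
  have "N (M *v x) \<le> C * (B / c)" if "N x = 1" for x
  proof -
    have nx: "norm x \<le> 1 / c" using c(2)[of x] that c(1) by (simp add: field_simps)
    have "N (M *v x) \<le> C * norm (M *v x)" by (rule C(2))
    also have "\<dots> \<le> C * (norm x * B)" using B(1) C(1) by (simp add: mult_left_mono)
    also have "\<dots> \<le> C * ((1/c) * B)" using nx B(2) C(1) by (intro mult_left_mono mult_right_mono) auto
    finally show ?thesis by simp
  qed
  then show ?thesis unfolding bdd_above_def by blast
qed

lemma induced_le:
  fixes N :: "real^'n \<Rightarrow> real" and M :: "real^'n^'n"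
  assumes "is_norm N"
  shows "N (M *v x) \<le> induced_norm N M * N x"
proof (cases "x = 0")
  case True then show ?thesis using normN_basic[OF assms] by simp
next
  case False
  then have pos: "N x > 0" using assms False unfolding is_norm_def by (metis less_eq_real_def)
  define u where "u = (1 / N x) *\<^sub>R x"
  have u1: "N u = 1" unfolding u_def using assms pos False unfolding is_norm_def by simp
  have "N (M *v u) \<le> induced_norm N M"
    unfolding induced_norm_def by (rule cSUP_upper[OF _ induced_bdd[OF assms]]) (simp add: u1)
  moreover have "N (M *v u) = N (M *v x) / N x"
    unfolding u_def using assms pos False unfolding is_norm_def by (simp add: matrix_vector_mult_scaleR)
  ultimately show ?thesis using pos by (simp add: field_simps)
qed

lemma induced_nonneg:
  fixes N :: "real^'n \<Rightarrow> real" and M :: "real^'n^'n"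
  assumes "is_norm N"
  shows "induced_norm N M \<ge> 0"
proof -
  define u :: "real^'n" where "u = axis undefined 1"
  have "u \<noteq> 0" unfolding u_def by (simp add: axis_eq_0_iff)
  then have pos: "N u > 0" using assms unfolding is_norm_def by (metis less_eq_real_def)
  have "0 \<le> N (M *v u)" using assms unfolding is_norm_def by blast
  also have "\<dots> \<le> induced_norm N M * N u" by (rule induced_le[OF assms])
  finally show ?thesis using pos by (simp add: zero_le_mult_iff)
qed

lemma matrix_inv_props:
  fixes A :: "real^'n^'n"
  assumes "invertible A"
  shows "A ** matrix_inv A = mat 1" "matrix_inv A ** A = mat 1"
proof -
  have "\<exists>A'. A ** A' = mat 1 \<and> A' ** A = mat 1" using assms unfolding invertible_def by blast
  then have "A ** matrix_inv A = mat 1 \<and> matrix_inv A ** A = mat 1"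
    unfolding matrix_inv_def by (rule someI_ex)
  then show "A ** matrix_inv A = mat 1" "matrix_inv A ** A = mat 1" by auto
qed

lemma evol_comp:
  assumes "fundamental_matrix A \<Phi>" "s \<ge> 0" "t \<ge> 0"
  shows "evol \<Phi> s t ** evol \<Phi> t s = mat 1"
proof -
  have it: "invertible (\<Phi> t)" and iS: "invertible (\<Phi> s)"
    using assms unfolding fundamental_matrix_def by auto
  have "evol \<Phi> s t ** evol \<Phi> t s = \<Phi> s ** (matrix_inv (\<Phi> t) ** \<Phi> t) ** matrix_inv (\<Phi> s)"
    unfolding evol_def by (simp add: matrix_mul_assoc)
  also have "\<dots> = mat 1" using matrix_inv_props[OF it] matrix_inv_props[OF iS]
    by (simp add: matrix_mul_rid)
  finally show ?thesis .
qed

lemma exp_contra: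
  fixes C \<delta> :: real
  assumes "C > 0" "\<delta> > 0" "\<And>d. d \<ge> 0 \<Longrightarrow> 1 \<le> C * exp (- \<delta> * d)"
  shows False
proof -
  define d where "d = max 0 (ln C / \<delta>) + 1"
  have d0: "d \<ge> 0" unfolding d_def by simp
  have "\<delta> * d > ln C" unfolding d_def using assms(2)
    by (smt (verit, best) divide_pos_pos mult.commute nonzero_mult_div_cancel_left pos_less_divide_eq max.cobounded2)
  then have "exp (- \<delta> * d) < exp (- ln C)" by simp
  then have "C * exp (- \<delta> * d) < C * exp (- ln C)" using assms(1) by simp
  also have "\<dots> = 1" using assms(1) by (simp add: exp_minus)
  finally show False using assms(3)[OF d0] by simp
qed

theorem mainTheorem1:
  fixes A \<Phi> P :: "real \<Rightarrow> real^'n^'n" and N :: "real^'n \<Rightarrow> real"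
    and K \<alpha> \<mu> K0 a \<epsilon> :: real
  assumes "continuous_on {0..} A"
    and "fundamental_matrix A \<Phi>"
    and "is_norm N"
    and "nonuniform_exp_dichotomy N \<Phi> P K \<alpha> \<mu>"
    and "nonuniform_bounded_growth N \<Phi> K0 a \<epsilon>"
  shows "a + max \<mu> \<epsilon> \<ge> \<alpha>"
proof (rule ccontr)
  assume H: "\<not> a + max \<mu> \<epsilon> \<ge> \<alpha>"
  note fm = assms(2) and nN = assms(3)
  note D = assms(4)[unfolded nonuniform_exp_dichotomy_def]
  note G = assms(5)[unfolded nonuniform_bounded_growth_def]
  have K: "K > 0" and K0: "K0 > 0" using D G by auto
  have Npos: "N x > 0" if "x \<noteq> 0" for x
    using nN that unfolding is_norm_def by (metis less_eq_real_def)
  have key: "1 \<le> B1 * B2"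
    if x0: "x \<noteq> 0" and eq: "x = E1 *v (E2 *v x)"
       and b1: "induced_norm N E1 \<le> B1" and b2: "induced_norm N E2 \<le> B2"
    for x :: "real^'n" and E1 E2 B1 B2
  proof -
    have "N x \<le> induced_norm N E1 * N (E2 *v x)" using induced_le[OF nN, of E1 "E2 *v x"] eq by simp
    also have "\<dots> \<le> induced_norm N E1 * (induced_norm N E2 * N x)"
      by (rule mult_left_mono[OF induced_le[OF nN] induced_nonneg[OF nN]])
    also have "\<dots> \<le> B1 * (B2 * N x)"
      apply (rule mult_mono[OF b1 mult_right_mono[OF b2]])
      using Npos[OF x0] induced_nonneg[OF nN, of E1] induced_nonneg[OF nN, of E2] b1 b2
      by (auto intro!: mult_nonneg_nonneg)
    finally show ?thesis using Npos[OF x0] by (simp add: mult.assoc)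
  qed
  show False
  proof (cases "\<exists>s\<ge>0. P s \<noteq> 0")
    case True
    then obtain s where s0: "s \<ge> 0" and Ps: "P s \<noteq> 0" by blast
    then obtain y where "P s *v y \<noteq> 0" by (metis matrix_eq matrix_vector_mult_0)
    define x where "x = P s *v y"
    have x0: "x \<noteq> 0" using \<open>P s *v y \<noteq> 0\<close> x_def by simp
    have Px: "P s *v x = x" unfolding x_def using D s0 by (simp add: matrix_vector_mul_assoc)
    show False
    proof (rule exp_contra)
      show "K0 * K * exp ((\<epsilon> + \<mu>) * s) > 0" using K K0 by simp
      show "\<alpha> - a - \<epsilon> > 0" using H by simp
      fix d :: real assume d0: "d \<ge> 0"
      define t where "t = s + d"
      have t0: "t \<ge> 0" "s \<le> t" using s0 d0 t_def by auto
      have eq: "x = evol \<Phi> s t *v ((evol \<Phi> t s ** P s) *v x)"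
        using evol_comp[OF fm s0 t0(1)] Px by (simp add: matrix_vector_mul_assoc matrix_mul_assoc)
      have b1: "induced_norm N (evol \<Phi> s t) \<le> K0 * exp (a * \<bar>s - t\<bar> + \<epsilon> * t)"
        using G s0 t0 by blast
      have b2: "induced_norm N (evol \<Phi> t s ** P s) \<le> K * exp (- \<alpha> * (t - s) + \<mu> * s)"
        using D s0 t0 by blast
      have "1 \<le> K0 * exp (a * \<bar>s - t\<bar> + \<epsilon> * t) * (K * exp (- \<alpha> * (t - s) + \<mu> * s))"
        by (rule key[OF x0 eq b1 b2])
      also have "\<dots> = K0 * K * exp ((\<epsilon> + \<mu>) * s) * exp (- (\<alpha> - a - \<epsilon>) * d)"
        unfolding t_def using d0 by (simp add: mult_exp_exp algebra_simps)
      finally show "1 \<le> K0 * K * exp ((\<epsilon> + \<mu>) * s) * exp (- (\<alpha> - a - \<epsilon>) * d)" .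
    qed
  next
    case False
    then have P0: "\<And>s. s \<ge> 0 \<Longrightarrow> P s = 0" by blast
    define x :: "real^'n" where "x = axis undefined 1"
    have x0: "x \<noteq> 0" unfolding x_def by (simp add: axis_eq_0_iff)
    show False
    proof (rule exp_contra)
      show "K0 * K > 0" using K K0 by simp
      show "\<alpha> - a - \<mu> > 0" using H by simp
      fix s :: real assume s0: "s \<ge> 0"
      have z: "(0::real) \<le> 0" by simp
      have eq: "x = evol \<Phi> s 0 *v ((evol \<Phi> 0 s ** (mat 1 - P s)) *v x)"
        using evol_comp[OF fm s0 z] P0[OF s0] by (simp add: matrix_vector_mul_assoc matrix_mul_assoc)
      have b1: "induced_norm N (evol \<Phi> s 0) \<le> K0 * exp (a * \<bar>s - 0\<bar> + \<epsilon> * 0)"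
        using G s0 by blast
      have b2: "induced_norm N (evol \<Phi> 0 s ** (mat 1 - P s)) \<le> K * exp (\<alpha> * (0 - s) + \<mu> * s)"
        using D s0 by blast
      have "1 \<le> K0 * exp (a * \<bar>s - 0\<bar> + \<epsilon> * 0) * (K * exp (\<alpha> * (0 - s) + \<mu> * s))"
        by (rule key[OF x0 eq b1 b2])
      also have "\<dots> = K0 * K * exp (- (\<alpha> - a - \<mu>) * s)"
        using s0 by (simp add: mult_exp_exp algebra_simps)
      finally show "1 \<le> K0 * K * exp (- (\<alpha> - a - \<mu>) * s)" .
    qed
  qed
qed

end
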